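(* Let $\Pi$ be a finite simply laced diagram with labelling $\sigma:I\to V$ and let $\widetilde{\mathcal A}$ be a continuous $\mathrm{Spin}(2)$-amalgam with respect to $\Pi$ and $\sigma$. Then $\widetilde{\mathcal A}$ is isomorphic to the standard $\mathrm{Spin}(2)$-amalgam $\mathcal A(\Pi,\sigma,\mathrm{Spin}(2))$.
   Context: $\mathrm{Spin}(m)$ lives in the real Clifford algebra with $e_k^2=-1$, $e_ke_l=-e_le_k$; $\mathrm{Spin}(2)=\{\cos\alpha+\sin\alpha\,e_1e_2\}$; $\widetilde\varepsilon_{12},\widetilde\varepsilon_{23}:\mathrm{Spin}(2)\to\mathrm{Spin}(3)$ are $a+be_1e_2\mapsto a+be_1e_2$ and $a+be_1e_2\mapsto a+be_2e_3$; $\widetilde\iota_1(x)=(x,1)$, $\widetilde\iota_2(x)=(1,x)$ into $\mathrm{Spin}(2)\times\mathrm{Spin}(2)$. A $\mathrm{Spin}(2)$-amalgam with respect to $\Pi$ and $\sigma$ is a family of groups $G_{ij}$ ($i\ne j\in I$) with monomorphisms $\phi^i_{ij}:\mathrm{Spin}(2)\to G_{ij}$, where $G_{ij}=\mathrm{Spin}(3)$ if $\{i^\sigma,j^\sigma\}$ is an edge of $\Pi$ and $G_{ij}=\mathrm{Spin}(2)\times\mathrm{Spin}(2)$ otherwise, and for $i<j$ the images satisfy $\phi^i_{ij}(\mathrm{Spin}(2))=\widetilde\varepsilon_{12}(\mathrm{Spin}(2))$, $\phi^j_{ij}(\mathrm{Spin}(2))=\widetilde\varepsilon_{23}(\mathrm{Spin}(2))$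 (edge) resp. $=\widetilde\iota_1(\mathrm{Spin}(2)),\widetilde\iota_2(\mathrm{Spin}(2))$ (non-edge). It is continuous if all $\phi^i_{ij}$ are continuous. The standard one has $\phi^i_{ij}=\widetilde\varepsilon_{12},\phi^j_{ij}=\widetilde\varepsilon_{23}$ resp. $\widetilde\iota_1,\widetilde\iota_2$ for $i<j$. An isomorphism of amalgams is a permutation $\pi$ of $I$ with group isomorphisms $\alpha_{ij}:G_{ij}\to H_{\pi(i)\pi(j)}$ satisfying $\alpha_{ij}\circ\phi^i_{ij}=\psi^{\pi(i)}_{\pi(i)\pi(j)}$. *)

theory Defs
  imports Complex_Main "HOL-Algebra.Group"
begin

text \<open>Model of the relevant part of the real Clifford algebra (e_k^2 = -1).
  Spin(2) = {a + b e1e2 : a^2+b^2 = 1}; we encode a + b e1e2 as the complex number a + b i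
  (since (e1e2)^2 = -1, this is an isomorphism of topological groups onto the unit circle).
  Spin(3) lies in the even subalgebra with basis 1, e1e2, e2e3, e3e1, which satisfies the
  quaternion relations with i = e1e2, j = e2e3, k = e3e1 (ij = k, jk = i, ki = j).
  We encode a + b e1e2 + c e2e3 + d e3e1 as the pair (a + b i, c + d i) of complex numbers
  (Cayley-Dickson: q = z + w j), and Spin(3) is the unit sphere of this even part.\<close>

definition Spin2 :: "complex monoid" where
  "Spin2 = \<lparr>carrier = {z. cmod z = 1}, mult = (*), one = 1\<rparr>"

definition qmult :: "complex \<times> complex \<Rightarrow> complex \<times> complex \<Rightarrow> complex \<times> complex" where
  "qmult p q = (fst p * fst q - snd p * cnj (snd q), fst p * snd q + snd p * cnj (fst q))"

definition Spin3 :: "(complex \<times> complex) monoid" where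
  "Spin3 = \<lparr>carrier = {p. (cmod (fst p))^2 + (cmod (snd p))^2 = 1}, mult = qmult, one = (1, 0)\<rparr>"

definition Torus :: "(complex \<times> complex) monoid" where
  "Torus = Spin2 \<times>\<times> Spin2"

text \<open>a + b e1e2 \<mapsto> a + b e1e2 and a + b e1e2 \<mapsto> a + b e2e3.\<close>
definition eps12 :: "complex \<Rightarrow> complex \<times> complex" where
  "eps12 x = (x, 0)"

definition eps23 :: "complex \<Rightarrow> complex \<times> complex" where
  "eps23 x = (complex_of_real (Re x), complex_of_real (Im x))"

definition iota1 :: "complex \<Rightarrow> complex \<times> complex" where
  "iota1 x = (x, 1)"

definition iota2 :: "complex \<Rightarrow> complex \<times> complex" where
  "iota2 x = (1, x)"

definition simply_laced_diagram :: "'v set \<Rightarrow> ('v \<Rightarrow> 'v \<Rightarrow> bool) \<Rightarrow> bool" where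
  "simply_laced_diagram V E \<longleftrightarrow> finite V \<and> (\<forall>x y. E x y \<longrightarrow> x \<in> V \<and> y \<in> V)
     \<and> (\<forall>x y. E x y \<longrightarrow> E y x) \<and> (\<forall>x. \<not> E x x)"

definition labelling :: "'i set \<Rightarrow> 'v set \<Rightarrow> ('i \<Rightarrow> 'v) \<Rightarrow> bool" where
  "labelling I V \<sigma> \<longleftrightarrow> bij_betw \<sigma> I V"

definition Gdiag :: "('v \<Rightarrow> 'v \<Rightarrow> bool) \<Rightarrow> ('i \<Rightarrow> 'v) \<Rightarrow> 'i \<Rightarrow> 'i \<Rightarrow> (complex \<times> complex) monoid" where
  "Gdiag E \<sigma> i j = (if E (\<sigma> i) (\<sigma> j) then Spin3 else Torus)"

text \<open>An amalgam is given by phi i j = phi^i_{ij} : Spin(2) -> G_{ij} for i \<noteq> j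
  (the group G_{ij} = G_{ji} being indexed by the unordered pair).\<close>
definition spin2_amalgam ::
  "'i::linorder set \<Rightarrow> ('v \<Rightarrow> 'v \<Rightarrow> bool) \<Rightarrow> ('i \<Rightarrow> 'v) \<Rightarrow> ('i \<Rightarrow> 'i \<Rightarrow> complex \<Rightarrow> complex \<times> complex) \<Rightarrow> bool" where
  "spin2_amalgam I E \<sigma> \<phi> \<longleftrightarrow>
     (\<forall>i\<in>I. \<forall>j\<in>I. i \<noteq> j \<longrightarrow>
        \<phi> i j \<in> hom Spin2 (Gdiag E \<sigma> i j) \<and> inj_on (\<phi> i j) (carrier Spin2)) \<and>
     (\<forall>i\<in>I. \<forall>j\<in>I. i < j \<longrightarrow>
        (if E (\<sigma> i) (\<sigma> j)
         then \<phi> i j ` carrier Spin2 = eps12 ` carrier Spin2 \<and> \<phi> j i ` carrier Spin2 = eps23 ` carrier Spin2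
         else \<phi> i j ` carrier Spin2 = iota1 ` carrier Spin2 \<and> \<phi> j i ` carrier Spin2 = iota2 ` carrier Spin2))"

definition continuous_amalgam :: "'i set \<Rightarrow> ('i \<Rightarrow> 'i \<Rightarrow> complex \<Rightarrow> complex \<times> complex) \<Rightarrow> bool" where
  "continuous_amalgam I \<phi> \<longleftrightarrow> (\<forall>i\<in>I. \<forall>j\<in>I. i \<noteq> j \<longrightarrow> continuous_on (carrier Spin2) (\<phi> i j))"

definition standard_amalgam ::
  "('v \<Rightarrow> 'v \<Rightarrow> bool) \<Rightarrow> ('i::linorder \<Rightarrow> 'v) \<Rightarrow> 'i \<Rightarrow> 'i \<Rightarrow> complex \<Rightarrow> complex \<times> complex" where
  "standard_amalgam E \<sigma> i j =
     (if i < j then (if E (\<sigma> i) (\<sigma> j) then eps12 else iota1)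
      else (if E (\<sigma> i) (\<sigma> j) then eps23 else iota2))"

definition amalgam_iso ::
  "'i set \<Rightarrow> ('v \<Rightarrow> 'v \<Rightarrow> bool) \<Rightarrow> ('i \<Rightarrow> 'v) \<Rightarrow> ('i \<Rightarrow> 'i \<Rightarrow> complex \<Rightarrow> complex \<times> complex)
     \<Rightarrow> ('i \<Rightarrow> 'i \<Rightarrow> complex \<Rightarrow> complex \<times> complex) \<Rightarrow> bool" where
  "amalgam_iso I E \<sigma> \<phi> \<psi> \<longleftrightarrow>
     (\<exists>\<pi> \<alpha>. bij_betw \<pi> I I \<and>
        (\<forall>i\<in>I. \<forall>j\<in>I. i \<noteq> j \<longrightarrow>
           \<alpha> i j = \<alpha> j i \<and>
           \<alpha> i j \<in> iso (Gdiag E \<sigma> i j) (Gdiag E \<sigma> (\<pi> i) (\<pi> j)) \<and>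
           (\<forall>x\<in>carrier Spin2. \<alpha> i j (\<phi> i j x) = \<psi> (\<pi> i) (\<pi> j) x)))"

end

theory Submission
  imports Defs "HOL-Analysis.Analysis"
begin

lemma additive_bounded_zero:
  fixes m :: "real \<Rightarrow> complex"
  assumes add: "\<And>s t. m (s + t) = m s + m t"
    and cont: "continuous_on UNIV m" and per: "m (2*pi) = 0"
  shows "m t = 0"
proof -
  have m0: "m 0 = 0" using add[of 0 0] by simp
  have neg: "m (-x) = - m x" for x using add[of x "-x"] m0 by (metis add.commute add_eq_0_iff2)
  have natm: "m (of_nat N * x) = of_nat N * m x" for N x
    by (induction N) (auto simp: m0 distrib_right add algebra_simps)
  have intper: "m (2*pi * of_int j) = 0" for j :: int
  proof (cases "j \<ge> 0")
    case True
    then obtain N where "j = int N" using nonneg_eq_int by blast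
    then show ?thesis using natm[of N "2*pi"] per by (simp add: mult.commute)
  next
    case False
    then obtain N where "j = - int N" by (metis int_cases2 linorder_not_le nat_int of_nat_0_le_iff order_less_le)
    then show ?thesis using natm[of N "2*pi"] per neg[of "2*pi * of_nat N"] by (simp add: mult.commute)
  qed
  have "compact (m ` {0..2*pi})"
    by (rule compact_continuous_image) (auto intro: continuous_on_subset[OF cont])
  then obtain B where B: "\<And>x. x \<in> {0..2*pi} \<Longrightarrow> norm (m x) \<le> B"
    using compact_imp_bounded bounded_iff by (metis imageI)
  have Ball: "norm (m x) \<le> B" for x
  proof -
    define j where "j = \<lfloor>x / (2*pi)\<rfloor>"
    define y where "y = x - 2*pi * of_int j"
    have "of_int j \<le> x/(2*pi)" "x/(2*pi) < of_int j + 1" unfolding j_def by linarith+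
    then have "2*pi * of_int j \<le> x" "x < 2*pi * of_int j + 2*pi"
      by (auto simp: field_simps)
    then have "y \<in> {0..2*pi}" unfolding y_def by auto
    moreover have "m x = m y" using add[of y "2*pi * of_int j"] intper[of j] unfolding y_def by simp
    ultimately show ?thesis using B by simp
  qed
  show ?thesis
  proof (rule ccontr)
    assume "m t \<noteq> 0"
    then have pos: "norm (m t) > 0" by simp
    obtain N :: nat where "B / norm (m t) < of_nat N" using reals_Archimedean2 by blast
    then have "B < of_nat N * norm (m t)" using pos by (simp add: field_simps)
    also have "\<dots> = norm (m (of_nat N * t))" by (simp add: natm norm_mult)
    finally show False using Ball[of "of_nat N * t"] by simp
  qed
qed

lemma circle_aut:
  fixes f :: "complex \<Rightarrow> complex"
  defines "S \<equiv> {z. cmod z = 1}"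
  assumes cont: "continuous_on S f" and maps: "\<And>z. z \<in> S \<Longrightarrow> f z \<in> S"
    and mult: "\<And>x y. x \<in> S \<Longrightarrow> y \<in> S \<Longrightarrow> f (x * y) = f x * f y"
    and inj: "inj_on f S"
  shows "(\<forall>z\<in>S. f z = z) \<or> (\<forall>z\<in>S. f z = cnj z)"
proof -
  define g where "g t = f (cis t)" for t
  have cisS: "cis t \<in> S" for t unfolding S_def by simp
  have contg: "continuous_on UNIV g" unfolding g_def
    by (rule continuous_on_compose2[OF cont]) (auto intro!: continuous_intros simp: cisS)
  have gnz: "g t \<noteq> 0" for t using maps[OF cisS[of t]] unfolding g_def S_def by auto
  obtain h where conth: "continuous_on UNIV h" and gh: "\<And>x. g x = exp (h x)"
    using continuous_logarithm_on_contractible[OF contg _ gnz] convex_imp_contractible convex_UNIV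
    by (metis UNIV_I)
  have gmult: "g (s + t) = g s * g t" for s t
    unfolding g_def by (simp add: cis_mult[symmetric] mult cisS add.commute)
  define D where "D p = h (fst p + snd p) - h (fst p) - h (snd p)" for p :: "real \<times> real"
  have Dint: "\<exists>n::int. D p = of_int (2 * n) * pi * \<i>" for p
  proof -
    have "exp (D p) = 1"
      unfolding D_def using gmult[of "fst p" "snd p"] gnz
      by (simp add: exp_diff gh[symmetric])
    then obtain n :: int where "Re (D p) = 0" "Im (D p) = of_int (2*n) * pi"
      using exp_eq_1 by blast
    then have "D p = of_int (2 * n) * pi * \<i>" by (simp add: complex_eq_iff)
    then show ?thesis by blast
  qed
  have contD: "continuous_on UNIV D" unfolding D_def
    by (intro continuous_intros continuous_on_compose2[OF conth]) auto
  have "D constant_on UNIV"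
  proof (rule continuous_discrete_range_constant[OF connected_UNIV contD])
    fix x :: "real \<times> real"
    show "\<exists>e>0. \<forall>y. y \<in> UNIV \<and> D y \<noteq> D x \<longrightarrow> e \<le> norm (D y - D x)"
    proof (intro exI[of _ 1] conjI allI impI)
      fix y assume "y \<in> UNIV \<and> D y \<noteq> D x"
      then have ne: "D y \<noteq> D x" by simp
      obtain a :: int where a: "D x = of_int (2 * a) * pi * \<i>" using Dint by blast
      obtain b :: int where b: "D y = of_int (2 * b) * pi * \<i>" using Dint by blast
      have "a \<noteq> b" using ne a b by auto
      then have "1 \<le> \<bar>of_int (2*b) - of_int (2*a) :: real\<bar>" by linarith
      also have "\<dots> \<le> \<bar>of_int (2*b) - of_int (2*a)\<bar> * pi"
        using pi_gt3 by (simp add: mult_le_cancel_left1)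
      also have "\<dots> = norm (D y - D x)"
      proof -
        have "D y - D x = complex_of_real ((of_int (2*b) - of_int (2*a)) * pi) * \<i>"
          unfolding a b by (simp add: algebra_simps)
        then have "norm (D y - D x) = \<bar>(of_int (2*b) - of_int (2*a)) * pi\<bar>"
          by (simp only: norm_mult norm_ii norm_of_real mult_1_right)
        then show ?thesis using pi_gt_zero by (simp add: abs_mult)
      qed
      finally show "1 \<le> norm (D y - D x)" by simp
    qed simp
  qed
  then have Dc: "D p = D (0,0)" for p unfolding constant_on_def by (metis UNIV_I)
  define k where "k t = h t - h 0" for t
  have kadd: "k (s + t) = k s + k t" for s t
    using Dc[of "(s,t)"] unfolding D_def k_def by (simp add: algebra_simps)
  have "exp (k (2*pi)) = 1"
  proof -
    have "g (2*pi) = g 0" unfolding g_def by simp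
    then show ?thesis unfolding k_def using gnz[of 0] by (simp add: exp_diff gh[symmetric])
  qed
  then obtain n :: int where n1: "Re (k (2*pi)) = 0" "Im (k (2*pi)) = of_int (2*n) * pi"
    using exp_eq_1 by blast
  define m where "m t = k t - \<i> * of_real (of_int n * t)" for t
  have m0: "m t = 0" for t
  proof (rule additive_bounded_zero)
    show "m (s + t) = m s + m t" for s t unfolding m_def using kadd by (simp add: algebra_simps)
    show "continuous_on UNIV m" unfolding m_def k_def by (intro continuous_intros conth)
    show "m (2*pi) = 0" unfolding m_def using n1 by (simp add: complex_eq_iff)
  qed
  have f1: "f 1 = 1"
  proof -
    have "1 \<in> S" unfolding S_def by simp
    then have "f 1 = f 1 * f 1" using mult[of 1 1] by simp
    moreover have "f 1 \<noteq> 0" using maps[of 1] \<open>1 \<in> S\<close> unfolding S_def by auto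
    ultimately show ?thesis by (metis mult_cancel_left1)
  qed
  have h0: "exp (h 0) = 1" using gh[of 0] f1 unfolding g_def by simp
  have fcis: "f (cis t) = cis (of_int n * t)" for t
  proof -
    have "h t = h 0 + \<i> * of_real (of_int n * t)" using m0[of t] unfolding m_def k_def by (simp add: algebra_simps)
    then have "f (cis t) = exp (h 0) * exp (\<i> * of_real (of_int n * t))"
      using gh[of t] unfolding g_def by (simp add: exp_add)
    then show ?thesis using h0 by (simp add: cis_conv_exp)
  qed
  have Scis: "z \<in> S \<Longrightarrow> z = cis (Arg z)" for z
  proof -
    assume "z \<in> S"
    then have "norm z = 1" unfolding S_def by simp
    then have "z \<noteq> 0" by auto
    then have "cis (Arg z) = sgn z" by (simp add: cis_Arg)
    then show ?thesis using \<open>norm z = 1\<close> by (simp add: sgn_div_norm)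
  qed
  have fcis_inj: "f (cis s) = f (cis t) \<Longrightarrow> cis s = cis t" for s t
    using inj cisS unfolding inj_on_def by blast
  consider "n = 1" | "n = -1" | "n = 0" | "\<bar>n\<bar> \<ge> 2" by linarith
  then show ?thesis
  proof cases
    case 1
    have "\<forall>z\<in>S. f z = z"
    proof
      fix z assume "z \<in> S"
      then have "f z = f (cis (Arg z))" using Scis by metis
      also have "\<dots> = cis (Arg z)" using fcis 1 by simp
      finally show "f z = z" using Scis \<open>z \<in> S\<close> by metis
    qed
    then show ?thesis by blast
  next
    case 2
    have "\<forall>z\<in>S. f z = cnj z"
    proof
      fix z assume "z \<in> S"
      then have "f z = f (cis (Arg z))" using Scis by metis
      also have "\<dots> = cnj (cis (Arg z))" using fcis 2 by (simp add: cis_cnj)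
      finally show "f z = cnj z" using Scis \<open>z \<in> S\<close> by metis
    qed
    then show ?thesis by blast
  next
    case 3
    then have "f (cis pi) = f (cis 0)" using fcis[of pi] fcis[of 0] by (simp only: of_int_0 mult_zero_left)
    then have "cis pi = cis 0" by (rule fcis_inj)
    then show ?thesis by simp
  next
    case 4
    then have "f (cis (2*pi / of_int n)) = f (cis 0)" using fcis f1 by simp
    then have "cis (2*pi / of_int n) = cis 0" by (rule fcis_inj)
    then have "cis (2*pi / of_int n) = 1" by simp
    then have "exp (\<i> * of_real (2*pi / of_int n)) = 1" by (simp add: cis_conv_exp)
    then obtain j :: int where "2*pi / of_int n = of_int (2*j) * pi"
      using exp_eq_1 by auto
    then have "(of_int n * of_int j :: real) = 1" using 4 by (simp add: field_simps mult.commute)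
    then have "1 = n * j" by (metis of_int_eq_1_iff of_int_mult)
    then have nj: "\<bar>n\<bar> * \<bar>j\<bar> = 1" by (metis abs_1 abs_mult)
    then have "j \<noteq> 0" by auto
    then have "\<bar>j\<bar> \<ge> 1" by linarith
    then have "\<bar>n\<bar> * \<bar>j\<bar> \<ge> 2 * 1" using 4 by (intro mult_mono) auto
    then show ?thesis using nj by simp
  qed
qed


abbreviation "SS \<equiv> {z::complex. cmod z = 1}"

lemma carrier_Spin2: "carrier Spin2 = SS" by (simp add: Spin2_def)
lemma mult_Spin2: "monoid.mult Spin2 x y = x * y" by (simp add: Spin2_def)
lemma carrier_Spin3: "carrier Spin3 = {p. (cmod (fst p))^2 + (cmod (snd p))^2 = 1}" by (simp add: Spin3_def)
lemma mult_Spin3: "monoid.mult Spin3 p q = qmult p q" by (simp add: Spin3_def)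
lemma carrier_Torus: "carrier Torus = SS \<times> SS" by (simp add: Torus_def DirProd_def Spin2_def)
lemma mult_Torus: "monoid.mult Torus p q = (fst p * fst q, snd p * snd q)"
  by (simp add: Torus_def DirProd_def Spin2_def case_prod_beta)

lemma embed_case:
  fixes ph e :: "complex \<Rightarrow> 'b::topological_space" and r :: "'b \<Rightarrow> complex"
  assumes cont: "continuous_on SS ph" and inj: "inj_on ph SS" and img: "ph ` SS = e ` SS"
    and hom: "\<And>x y. x \<in> SS \<Longrightarrow> y \<in> SS \<Longrightarrow> ph (x * y) = M (ph x) (ph y)"
    and emul: "\<And>u v. u \<in> SS \<Longrightarrow> v \<in> SS \<Longrightarrow> M (e u) (e v) = e (u * v)"
    and rinv: "\<And>w. w \<in> SS \<Longrightarrow> r (e w) = w"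
    and contr: "continuous_on UNIV r"
  shows "(\<forall>x\<in>SS. ph x = e x) \<or> (\<forall>x\<in>SS. ph x = e (cnj x))"
proof -
  have ex: "\<exists>w\<in>SS. ph x = e w" if "x \<in> SS" for x using img that by blast
  define f where "f x = r (ph x)" for x
  have phf: "ph x = e (f x)" and fS: "f x \<in> SS" if "x \<in> SS" for x
    using ex[OF that] rinv unfolding f_def by auto
  have "(\<forall>z\<in>SS. f z = z) \<or> (\<forall>z\<in>SS. f z = cnj z)"
  proof (rule circle_aut)
    show "continuous_on SS f" unfolding f_def
      by (rule continuous_on_compose2[OF contr cont]) auto
    show "f z \<in> SS" if "z \<in> SS" for z using fS that by blast
    show "f (x * y) = f x * f y" if "x \<in> SS" "y \<in> SS" for x y
    proof -
      have "x * y \<in> SS" using that by (simp add: norm_mult)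
      have "ph (x * y) = e (f x * f y)" using hom[OF that] phf[OF that(1)] phf[OF that(2)]
          emul[OF fS[OF that(1)] fS[OF that(2)]] by simp
      then have "f (x * y) = r (e (f x * f y))" unfolding f_def by simp
      then show ?thesis using rinv[of "f x * f y"] fS[OF that(1)] fS[OF that(2)] by (simp add: norm_mult)
    qed
    show "inj_on f SS"
    proof (rule inj_onI)
      fix x y assume "x \<in> SS" "y \<in> SS" "f x = f y"
      then have "ph x = ph y" using phf by metis
      then show "x = y" using inj \<open>x \<in> SS\<close> \<open>y \<in> SS\<close> unfolding inj_on_def by blast
    qed
  qed
  then show ?thesis using phf by auto
qed

definition cj :: "bool \<Rightarrow> complex \<Rightarrow> complex" where
  "cj b z = (if b then cnj z else z)"
definition sg :: "bool \<Rightarrow> complex" where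
  "sg b = (if b then -1 else 1)"

definition edgeMap :: "bool \<Rightarrow> bool \<Rightarrow> complex \<times> complex \<Rightarrow> complex \<times> complex" where
  "edgeMap p q z = (cj p (fst z), sg q * cj p (snd z))"
definition torMap :: "bool \<Rightarrow> bool \<Rightarrow> complex \<times> complex \<Rightarrow> complex \<times> complex" where
  "torMap p q z = (cj p (fst z), cj q (snd z))"

lemma edgeMap_iso: "edgeMap p q \<in> iso Spin3 Spin3"
proof -
  have inv: "edgeMap p q (edgeMap p q z) = z" for z
    by (cases p; cases q) (auto simp: edgeMap_def cj_def sg_def)
  have car: "edgeMap p q z \<in> carrier Spin3" if "z \<in> carrier Spin3" for z
    using that by (cases p; cases q) (auto simp: edgeMap_def cj_def sg_def carrier_Spin3)
  have hom: "edgeMap p q (qmult a b) = qmult (edgeMap p q a) (edgeMap p q b)" for a b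
    by (cases p; cases q) (auto simp: edgeMap_def cj_def sg_def qmult_def algebra_simps)
  have "bij_betw (edgeMap p q) (carrier Spin3) (carrier Spin3)"
    by (rule bij_betw_byWitness[where f'="edgeMap p q"]) (use inv car in auto)
  then show ?thesis
    unfolding iso_def hom_def using car hom by (auto simp: mult_Spin3)
qed

lemma torMap_iso: "torMap p q \<in> iso Torus Torus"
proof -
  have inv: "torMap p q (torMap p q z) = z" for z
    by (cases p; cases q) (auto simp: torMap_def cj_def)
  have car: "torMap p q z \<in> carrier Torus" if "z \<in> carrier Torus" for z
    using that by (cases p; cases q) (auto simp: torMap_def cj_def carrier_Torus)
  have hom: "torMap p q (fst a * fst b, snd a * snd b) = (fst (torMap p q a) * fst (torMap p q b), snd (torMap p q a) * snd (torMap p q b))" for a b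
    by (cases p; cases q) (auto simp: torMap_def cj_def)
  have "bij_betw (torMap p q) (carrier Torus) (carrier Torus)"
    by (rule bij_betw_byWitness[where f'="torMap p q"]) (use inv car in auto)
  then show ?thesis
    unfolding iso_def hom_def using car hom by (auto simp: mult_Torus)
qed

lemma qmult_eps12: "qmult (eps12 u) (eps12 v) = eps12 (u * v)"
  by (simp add: qmult_def eps12_def)
lemma qmult_eps23: "qmult (eps23 u) (eps23 v) = eps23 (u * v)"
  by (simp add: qmult_def eps23_def complex_eq_iff)
lemma tmult_iota1: "(fst (iota1 u) * fst (iota1 v), snd (iota1 u) * snd (iota1 v)) = iota1 (u * v)"
  by (simp add: iota1_def)
lemma tmult_iota2: "(fst (iota2 u) * fst (iota2 v), snd (iota2 u) * snd (iota2 v)) = iota2 (u * v)"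
  by (simp add: iota2_def)

lemma hom_Spin3D: "h \<in> hom Spin2 Spin3 \<Longrightarrow> x \<in> SS \<Longrightarrow> y \<in> SS \<Longrightarrow> h (x * y) = qmult (h x) (h y)"
  unfolding hom_def by (auto simp: carrier_Spin2 mult_Spin2 mult_Spin3)
lemma hom_TorusD: "h \<in> hom Spin2 Torus \<Longrightarrow> x \<in> SS \<Longrightarrow> y \<in> SS \<Longrightarrow>
    h (x * y) = (fst (h x) * fst (h y), snd (h x) * snd (h y))"
  unfolding hom_def by (auto simp: carrier_Spin2 mult_Spin2 mult_Torus)

lemma case_eps12:
  assumes "ph \<in> hom Spin2 Spin3" "inj_on ph SS" "continuous_on SS ph" "ph ` SS = eps12 ` SS"
  shows "(\<forall>x\<in>SS. ph x = eps12 x) \<or> (\<forall>x\<in>SS. ph x = eps12 (cnj x))"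
  by (rule embed_case[where M=qmult and r=fst])
     (use assms hom_Spin3D qmult_eps12 in \<open>auto simp: eps12_def intro: continuous_intros\<close>)

lemma case_eps23:
  assumes "ph \<in> hom Spin2 Spin3" "inj_on ph SS" "continuous_on SS ph" "ph ` SS = eps23 ` SS"
  shows "(\<forall>x\<in>SS. ph x = eps23 x) \<or> (\<forall>x\<in>SS. ph x = eps23 (cnj x))"
  by (rule embed_case[where M=qmult and r="\<lambda>p. fst p + \<i> * snd p"])
     (use assms hom_Spin3D qmult_eps23 in \<open>auto simp: eps23_def complex_eq_iff intro!: continuous_intros\<close>)

lemma case_iota1:
  assumes "ph \<in> hom Spin2 Torus" "inj_on ph SS" "continuous_on SS ph" "ph ` SS = iota1 ` SS"
  shows "(\<forall>x\<in>SS. ph x = iota1 x) \<or> (\<forall>x\<in>SS. ph x = iota1 (cnj x))"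
  by (rule embed_case[where M="\<lambda>p q. (fst p * fst q, snd p * snd q)" and r=fst])
     (use assms hom_TorusD tmult_iota1 in \<open>auto simp: iota1_def intro: continuous_intros\<close>)

lemma case_iota2:
  assumes "ph \<in> hom Spin2 Torus" "inj_on ph SS" "continuous_on SS ph" "ph ` SS = iota2 ` SS"
  shows "(\<forall>x\<in>SS. ph x = iota2 x) \<or> (\<forall>x\<in>SS. ph x = iota2 (cnj x))"
  by (rule embed_case[where M="\<lambda>p q. (fst p * fst q, snd p * snd q)" and r=snd])
     (use assms hom_TorusD tmult_iota2 in \<open>auto simp: iota2_def intro: continuous_intros\<close>)

lemma edge_eq1: "edgeMap p q (eps12 (cj p x)) = eps12 x"
  by (cases p; cases q) (auto simp: edgeMap_def eps12_def cj_def sg_def)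
lemma edge_eq2: "edgeMap p q (eps23 (cj q x)) = eps23 x"
  by (cases p; cases q) (auto simp: edgeMap_def eps23_def cj_def sg_def complex_eq_iff)
lemma tor_eq1: "torMap p q (iota1 (cj p x)) = iota1 x"
  by (cases p; cases q) (auto simp: torMap_def iota1_def cj_def)
lemma tor_eq2: "torMap p q (iota2 (cj q x)) = iota2 x"
  by (cases p; cases q) (auto simp: torMap_def iota2_def cj_def)

theorem mainTheorem7:
  fixes I :: "'i::linorder set" and V :: "'v set" and E :: "'v \<Rightarrow> 'v \<Rightarrow> bool"
    and \<sigma> :: "'i \<Rightarrow> 'v" and \<phi> :: "'i \<Rightarrow> 'i \<Rightarrow> complex \<Rightarrow> complex \<times> complex"
  assumes "simply_laced_diagram V E"
    and "labelling I V \<sigma>"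
    and "spin2_amalgam I E \<sigma> \<phi>"
    and "continuous_amalgam I \<phi>"
  shows "amalgam_iso I E \<sigma> \<phi> (standard_amalgam E \<sigma>)"
proof -
  have sym: "\<And>a b. E a b \<Longrightarrow> E b a" using assms(1) unfolding simply_laced_diagram_def by blast
  have symE: "E (\<sigma> i) (\<sigma> j) = E (\<sigma> j) (\<sigma> i)" for i j using sym by blast
  have Gsym: "Gdiag E \<sigma> i j = Gdiag E \<sigma> j i" for i j unfolding Gdiag_def using symE by simp
  define std where "std = standard_amalgam E \<sigma>"
  have A1: "\<phi> i j \<in> hom Spin2 (Gdiag E \<sigma> i j) \<and> inj_on (\<phi> i j) SS"
    if "i \<in> I" "j \<in> I" "i \<noteq> j" for i j
    using assms(3) that unfolding spin2_amalgam_def by (simp add: carrier_Spin2)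
  have A2: "if E (\<sigma> i) (\<sigma> j)
         then \<phi> i j ` SS = eps12 ` SS \<and> \<phi> j i ` SS = eps23 ` SS
         else \<phi> i j ` SS = iota1 ` SS \<and> \<phi> j i ` SS = iota2 ` SS"
    if "i \<in> I" "j \<in> I" "i < j" for i j
    using assms(3) that unfolding spin2_amalgam_def carrier_Spin2 by blast
  have C: "continuous_on SS (\<phi> i j)" if "i \<in> I" "j \<in> I" "i \<noteq> j" for i j
    using assms(4) that unfolding continuous_amalgam_def by (simp add: carrier_Spin2)
  have form: "(\<forall>x\<in>SS. \<phi> i j x = std i j x) \<or> (\<forall>x\<in>SS. \<phi> i j x = std i j (cnj x))"
    if ij: "i \<in> I" "j \<in> I" "i \<noteq> j" for i j
  proof (cases "i < j")
    case True
    show ?thesis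
    proof (cases "E (\<sigma> i) (\<sigma> j)")
      case e: True
      then show ?thesis using case_eps12[of "\<phi> i j"] A1[OF ij] A2[OF ij(1,2) True] C[OF ij] True
        by (simp add: std_def standard_amalgam_def Gdiag_def)
    next
      case e: False
      then show ?thesis using case_iota1[of "\<phi> i j"] A1[OF ij] A2[OF ij(1,2) True] C[OF ij] True
        by (simp add: std_def standard_amalgam_def Gdiag_def)
    qed
  next
    case False
    then have ji: "j < i" using ij(3) by simp
    show ?thesis
    proof (cases "E (\<sigma> j) (\<sigma> i)")
      case e: True
      then show ?thesis using case_eps23[of "\<phi> i j"] A1[OF ij] A2[OF ij(2,1) ji] C[OF ij] False symE[of i j]
        by (simp add: std_def standard_amalgam_def Gdiag_def)
    next
      case e: False
      then show ?thesis using case_iota2[of "\<phi> i j"] A1[OF ij] A2[OF ij(2,1) ji] C[OF ij] False symE[of i j]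
        by (simp add: std_def standard_amalgam_def Gdiag_def)
    qed
  qed
  define c where "c i j = (\<not> (\<forall>x\<in>SS. \<phi> i j x = std i j x))" for i j
  have phic: "\<phi> i j x = std i j (cj (c i j) x)" if "i \<in> I" "j \<in> I" "i \<noteq> j" "x \<in> SS" for i j x
    using form[OF that(1-3)] that(4) unfolding c_def cj_def by auto
  define \<beta> where "\<beta> a b = (if E (\<sigma> a) (\<sigma> b) then edgeMap (c a b) (c b a) else torMap (c a b) (c b a))" for a b
  define \<alpha> where "\<alpha> i j = (if i < j then \<beta> i j else \<beta> j i)" for i j
  have \<beta>iso: "\<beta> a b \<in> iso (Gdiag E \<sigma> a b) (Gdiag E \<sigma> a b)" for a b
    unfolding \<beta>_def Gdiag_def using edgeMap_iso torMap_iso by simp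
  show ?thesis
    unfolding amalgam_iso_def
  proof (intro exI[of _ id] exI[of _ \<alpha>] conjI ballI impI)
    show "bij_betw id I I" by simp
    fix i j assume ij: "i \<in> I" "j \<in> I" "i \<noteq> j"
    show "\<alpha> i j = \<alpha> j i" unfolding \<alpha>_def using ij(3) by auto
    show "\<alpha> i j \<in> iso (Gdiag E \<sigma> i j) (Gdiag E \<sigma> (id i) (id j))"
    proof (cases "i < j")
      case True
      then show ?thesis unfolding \<alpha>_def using \<beta>iso by simp
    next
      case False
      then show ?thesis unfolding \<alpha>_def using \<beta>iso[of j i] Gsym[of i j] by simp
    qed
    fix x assume x: "x \<in> carrier Spin2"
    then have x': "x \<in> SS" by (simp add: carrier_Spin2)
    show "\<alpha> i j (\<phi> i j x) = standard_amalgam E \<sigma> (id i) (id j) x"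
    proof (cases "i < j")
      case True
      then show ?thesis using phic[OF ij x'] edge_eq1 tor_eq1
        by (simp add: \<alpha>_def \<beta>_def std_def standard_amalgam_def)
    next
      case False
      then show ?thesis using phic[OF ij x'] edge_eq2 tor_eq2 symE[of i j]
        by (simp add: \<alpha>_def \<beta>_def std_def standard_amalgam_def)
    qed
  qed
qed

end
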